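(* Let $P(x)=a_2x^2+a_1x+a_0$, $R(x)=b_2x^2+b_1x$ and $Q(x)=q_2x^2+q_1x+q_0$ be complex polynomials with $a_2,b_2,q_2\ne0$. For $n\ge0$ and $\alpha\in\mathbb C$ let $\tilde F(n,\alpha)=\prod_{z\in Q^{-1}(P^{-1}(R^{-n}(\alpha)))}z$, the product of the $2^{n+2}$ roots, counted with multiplicity, of $R^{\circ n}(P(Q(z)))=\alpha$. Then $\tilde F(n,\alpha)=\tilde c_{n,1}\alpha+\tilde c_{n,0}$ with $\tilde c_{n,1}=-\frac{b_2}{(q_2^2a_2b_2)^{2^n}}$ and $\tilde c_{n,0}=\frac{1}{(q_2^2a_2b_2)^{2^n}}\big(\tilde H(n)-\frac{b_1}{2}\big)$, where $\tilde H(0)=a_2b_2\big(q_0^2+q_0\frac{a_1}{a_2}+\frac{a_0}{a_2}\big)+\frac{b_1}{2}$ and $\tilde H(n)=\tilde H(n-1)^2+\frac{b_1(2-b_1)}{4}$ for $n\ge1$.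
   Context: $R^{\circ n}$ denotes the $n$-fold composition ($R^{\circ0}=\mathrm{id}$); $R^{-n}(\alpha)$ is the multiset of roots of $R^{\circ n}(w)=\alpha$, and for a polynomial $g$ and multiset $S$, $g^{-1}(S)$ is the multiset union of the roots of $g(z)=w$ over $w\in S$. *)

theory Defs
  imports "HOL-Computational_Algebra.Computational_Algebra"
begin

definition poly_iter :: "complex poly \<Rightarrow> nat \<Rightarrow> complex poly" where
  "poly_iter R n = ((\<lambda>p. pcompose R p) ^^ n) [:0, 1:]"

definition iter_preimage :: "complex poly \<Rightarrow> nat \<Rightarrow> complex \<Rightarrow> complex multiset" where
  "iter_preimage R n \<alpha> = proots (poly_iter R n - [:\<alpha>:])"

definition preimage_mset :: "complex poly \<Rightarrow> complex multiset \<Rightarrow> complex multiset" where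
  "preimage_mset g S = (\<Sum>w\<in>#S. proots (g - [:w:]))"

definition Ftilde :: "complex poly \<Rightarrow> complex poly \<Rightarrow> complex poly \<Rightarrow> nat \<Rightarrow> complex \<Rightarrow> complex" where
  "Ftilde P Q R n \<alpha> = (\<Prod>z\<in>#preimage_mset Q (preimage_mset P (iter_preimage R n \<alpha>)). z)"

fun Htilde :: "complex \<Rightarrow> complex \<Rightarrow> complex \<Rightarrow> complex \<Rightarrow> complex \<Rightarrow> complex \<Rightarrow> nat \<Rightarrow> complex" where
  "Htilde a0 a1 a2 b1 b2 q0 0 = a2 * b2 * (q0^2 + q0 * (a1 / a2) + a0 / a2) + b1 / 2"
| "Htilde a0 a1 a2 b1 b2 q0 (Suc n) = (Htilde a0 a1 a2 b1 b2 q0 n)^2 + b1 * (2 - b1) / 4"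

end

theory Submission
  imports Defs
begin

lemma proots_prod_shift:
  fixes g :: "complex poly"
  assumes "degree g > 0"
  shows "proots (\<Prod>x\<in>#A. g - [:x:]) = (\<Sum>x\<in>#A. proots (g - [:x:]))"
proof (induction A)
  case empty then show ?case by simp
next
  case (add x A)
  have ne: "g - [:y:] \<noteq> 0" for y
    using assms by (metis degree_pCons_0 diff_eq_eq add.commute add_0 degree_add_eq_left less_numeral_extra(3) degree_0)
  have "(\<Prod>x\<in>#A. g - [:x:]) \<noteq> 0" using ne by (induction A) auto
  then show ?case using add ne by (simp add: proots_mult)
qed

lemma lin_shift: "[:- x:] + g = g - [:x::complex:]"
  by (metis add.commute diff_conv_add_uminus minus_pCons minus_poly.rep_eq pCons_0_0 neg_equal_0_iff_equal)

lemma pcompose_prod_mset: "pcompose (\<Prod>x\<in>#A. f x) p = (\<Prod>x\<in>#A. pcompose (f x) p)"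
  by (induction A) (simp_all add: pcompose_1 pcompose_mult)

lemma preimage_proots:
  fixes g h :: "complex poly"
  assumes "degree g > 0" "h \<noteq> 0"
  shows "preimage_mset g (proots h) = proots (pcompose h g)"
proof -
  have "pcompose h g = pcompose (smult (lead_coeff h) (\<Prod>x\<in>#proots h. [:-x, 1:])) g"
    by (simp add: complex_poly_decompose_multiset)
  also have "\<dots> = smult (lead_coeff h) (\<Prod>x\<in>#proots h. g - [:x:])"
    by (simp add: pcompose_smult pcompose_prod_mset pcompose_pCons lin_shift)
  finally have "proots (pcompose h g) = proots (\<Prod>x\<in>#proots h. g - [:x:])"
    using assms by simp
  then show ?thesis using proots_prod_shift[OF assms(1)] by (simp add: preimage_mset_def)
qed

lemma prod_mset_uminus: "(\<Prod>x\<in>#A. - (x::complex)) = (-1) ^ size A * prod_mset A"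
  by (induction A) simp_all

lemma prod_proots:
  fixes p :: "complex poly"
  assumes "p \<noteq> 0"
  shows "prod_mset (proots p) = (-1) ^ degree p * coeff p 0 / lead_coeff p"
proof -
  have "coeff p 0 = poly p 0" by (simp add: poly_0_coeff_0)
  also have "\<dots> = poly (smult (lead_coeff p) (\<Prod>x\<in>#proots p. [:-x, 1:])) 0"
    by (simp add: complex_poly_decompose_multiset)
  also have "\<dots> = lead_coeff p * (\<Prod>x\<in>#proots p. - x)"
    by (simp add: poly_prod_mset)
  also have "\<dots> = lead_coeff p * (-1) ^ degree p * prod_mset (proots p)"
    by (simp add: prod_mset_uminus size_proots_complex)
  finally show ?thesis using assms by (simp add: field_simps)
qed

lemma poly_iter_Suc: "poly_iter R (Suc n) = pcompose R (poly_iter R n)"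
  by (simp add: poly_iter_def)

lemma poly_iter_facts:
  fixes b1 b2 :: complex
  assumes "b2 \<noteq> 0"
  shows "degree (poly_iter [:0, b1, b2:] n) = 2 ^ n \<and>
         b2 * lead_coeff (poly_iter [:0, b1, b2:] n) = b2 ^ (2 ^ n)"
proof (induction n)
  case 0 then show ?case by (simp add: poly_iter_def)
next
  case (Suc n)
  let ?R = "[:0, b1, b2:]" and ?I = "poly_iter [:0, b1, b2:] n"
  have dR: "degree ?R = 2" using assms by simp
  have dI: "degree ?I > 0" using Suc by simp
  have "degree (pcompose ?R ?I) = 2 * 2 ^ n" using Suc dR by (simp add: degree_pcompose)
  moreover have "lead_coeff (pcompose ?R ?I) = b2 * lead_coeff ?I ^ 2"
    using lead_coeff_comp[OF dI, of ?R] dR assms by (simp add: power2_eq_square)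
  moreover have "b2 * (b2 * lead_coeff ?I ^ 2) = (b2 * lead_coeff ?I)^2"
    by (simp add: power2_eq_square)
  moreover have "(b2 * lead_coeff ?I)^2 = b2 ^ (2 ^ Suc n)"
  proof -
    have e: "b2 * lead_coeff ?I = b2^2^n" using Suc by blast
    show ?thesis by (simp only: e) (simp add: power_mult[symmetric] mult.commute)
  qed
  ultimately show ?case
    by (simp only: poly_iter_Suc) simp
qed

lemma poly_iter_eval:
  fixes b1 b2 c :: complex
  assumes "c = a2 * q0^2 + a1 * q0 + a0" "a2 \<noteq> 0"
  shows "b2 * poly (poly_iter [:0, b1, b2:] n) c + b1 / 2 =
    Htilde a0 a1 a2 b1 b2 q0 n"
  using assms
proof (induction n)
  case 0 then show ?case by (simp add: poly_iter_def field_simps power2_eq_square)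
next
  case (Suc n)
  define x where "x = poly (poly_iter [:0, b1, b2:] n) c"
  have IH: "Htilde a0 a1 a2 b1 b2 q0 n = b2 * x + b1 / 2" using Suc x_def by simp
  have "b2 * poly (poly_iter [:0, b1, b2:] (Suc n)) c + b1 / 2 = b2 * (b1 * x + b2 * x * x) + b1 / 2"
    by (simp add: poly_iter_Suc poly_pcompose x_def algebra_simps)
  also have "\<dots> = (b2 * x + b1 / 2)^2 + b1 * (2 - b1) / 4"
    by (simp add: power2_eq_square field_simps)
  finally show ?case using IH by simp
qed

theorem lemma5p6:
  fixes a0 a1 a2 b1 b2 q0 q1 q2 :: complex and n :: nat and \<alpha> :: complex
  assumes "a2 \<noteq> 0" and "b2 \<noteq> 0" and "q2 \<noteq> 0"
  shows "Ftilde [:a0, a1, a2:] [:q0, q1, q2:] [:0, b1, b2:] n \<alpha> =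
           (- b2 / (q2^2 * a2 * b2) ^ (2^n)) * \<alpha>
           + (1 / (q2^2 * a2 * b2) ^ (2^n)) * (Htilde a0 a1 a2 b1 b2 q0 n - b1 / 2)"
proof -
  let ?P = "[:a0, a1, a2:]" and ?Q = "[:q0, q1, q2:]" and ?R = "[:0, b1, b2:]"
  let ?I = "poly_iter ?R n"
  define L where "L = lead_coeff ?I"
  have dI: "degree ?I = 2 ^ n" and bL: "b2 * L = b2 ^ (2 ^ n)"
    using poly_iter_facts[OF assms(2), of b1 n] unfolding L_def by auto
  have dP: "degree ?P = 2" using assms by simp
  have dQ: "degree ?Q = 2" using assms by simp
  have lP: "lead_coeff ?P = a2" using dP by (simp add: numeral_2_eq_2)
  have lQ: "lead_coeff ?Q = q2" using dQ by (simp add: numeral_2_eq_2)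
  have dIa: "degree (?I - [:\<alpha>:]) = 2 ^ n"
  proof -
    have "?I - [:\<alpha>:] = ?I + [:-\<alpha>:]" by simp
    moreover have "degree [:-\<alpha>:] < degree ?I" using dI by simp
    ultimately show ?thesis using dI degree_add_eq_left by metis
  qed
  have lIa: "lead_coeff (?I - [:\<alpha>:]) = L"
  proof -
    obtain k where k: "(2::nat)^n = Suc k" using not0_implies_Suc by (metis power_not_zero zero_neq_numeral)
    have "coeff [:\<alpha>:] (2^n) = 0" by (simp add: k)
    then show ?thesis using dI dIa L_def by simp
  qed
  have ne1: "?I - [:\<alpha>:] \<noteq> 0" using dIa by (metis degree_0 power_not_zero zero_neq_numeral)
  define T1 where "T1 = pcompose (?I - [:\<alpha>:]) ?P"
  have dT1: "degree T1 = 2 ^ n * 2" using dIa dP by (simp add: T1_def degree_pcompose)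
  have lT1: "lead_coeff T1 = L * a2 ^ (2 ^ n)"
    using lead_coeff_comp[of ?P "?I - [:\<alpha>:]"] dP dIa lIa lP by (simp add: T1_def)
  have ne2: "T1 \<noteq> 0" using dT1 by (metis degree_0 mult_eq_0_iff power_not_zero zero_neq_numeral)
  define T where "T = pcompose T1 ?Q"
  have dT: "degree T = 2 ^ n * 2 * 2" using dT1 dQ by (simp add: T_def degree_pcompose)
  have lT: "lead_coeff T = L * a2 ^ (2 ^ n) * q2 ^ (2 ^ n * 2)"
    using lead_coeff_comp[of ?Q T1] dQ dT1 lT1 lQ by (simp add: T_def power_mult)
  have ne3: "T \<noteq> 0" using dT by (metis degree_0 mult_eq_0_iff power_not_zero zero_neq_numeral)
  have c0: "coeff T 0 = poly ?I (a2 * q0^2 + a1 * q0 + a0) - \<alpha>"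
    by (simp add: T_def T1_def pcompose_coeff_0 poly_pcompose power2_eq_square algebra_simps)
  have F: "Ftilde ?P ?Q ?R n \<alpha> = prod_mset (proots T)"
    unfolding Ftilde_def iter_preimage_def
    using preimage_proots[of ?P "?I - [:\<alpha>:]"] preimage_proots[of ?Q T1] dP dQ ne1 ne2
    by (simp add: T_def T1_def)
  have ev: "(-1::complex) ^ (2 ^ n * 2 * 2) = 1" by (simp add: power_mult)
  have H: "Htilde a0 a1 a2 b1 b2 q0 n = b2 * poly ?I (a2 * q0^2 + a1 * q0 + a0) + b1 / 2"
    by (rule poly_iter_eval[symmetric]) (use assms in auto)
  have L0: "L \<noteq> 0" using bL assms by auto
  have "Ftilde ?P ?Q ?R n \<alpha> = (poly ?I (a2 * q0^2 + a1 * q0 + a0) - \<alpha>) / (L * a2 ^ (2 ^ n) * q2 ^ (2 ^ n * 2))"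
    using F prod_proots[OF ne3] dT lT c0 ev by simp
  also have "\<dots> = b2 * (poly ?I (a2 * q0^2 + a1 * q0 + a0) - \<alpha>) / (q2^2 * a2 * b2) ^ (2^n)"
    using L0 assms by (simp add: bL[symmetric] power_mult_distrib power_mult field_simps)
  finally show ?thesis using H assms by (simp add: field_simps)
qed

end
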